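(* Let $\gamma_{ab}$, $h_{ab}$ be real symmetric invertible $2\times2$ matrices with $a_1=\gamma_{ab}h^{ba}$, $a_2=\gamma_{ab}h^{bc}\gamma_{cd}h^{da}$, and $\gamma=|\det\gamma_{ab}|$. (i) (Diffeomorphism-invariant case.) Let $\mathcal{L}=\sqrt{\gamma}\,f(a_1,a_2)$ with $f$ continuously differentiable. If $\partial\mathcal{L}/\partial h^{ij}=0$ and $\partial f/\partial a_1\neq0$, then $h_{ab}=\phi\gamma_{ab}$ where $\phi$ is a root of the $\gamma$-independent equation $$\phi=-2\,\frac{\partial f/\partial a_2}{\partial f/\partial a_1}\Bigg|_{a_1=2\phi^{-1},\ a_2=2\phi^{-2}},$$ and the Lagrangian evaluates to $\mathcal{L}=c\sqrt{\gamma}$ with $c=f(2\phi^{-1},2\phi^{-2})$. (ii) (Diffeomorphism–Weyl-invariant case.) Let $\mathcal{L}=\sqrt{\gamma}\,f(a_2/a_1^2)$ with $f$ continuously differentiable. Then for every nonzero real $\phi$, $h_{ab}=\phi\gamma_{ab}$ satisfies $\partial\mathcal{L}/\partial h^{ij}=0$, and at any such $h$ the Lagrangian equals $f(\tfrac12)\sqrt{\gamma}$. Moreover, if $a_1\neq0$ and $f'(a_2/a_1^2)\neq0$, every solution of $\partial\mathcal{L}/\partial h^{ij}=0$ is of the form $h_{ab}=\phi\gamma_{ab}$ with $\phi\neq0$.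
   Context: $h^{ab}$ denotes the inverse of $h_{ab}$; derivatives with respect to $h^{ij}$ are taken with $\gamma_{ab}$ fixed, using $\partial a_1/\partial h^{ij}=\gamma_{ji}$ and $\partial a_2/\partial h^{ij}=2\gamma_{ja}h^{ab}\gamma_{bi}$. *)

theory Defs
  imports "HOL-Analysis.Analysis"
begin

text \<open>Real 2x2 matrices are \<open>real^2^2\<close>. The argument \<open>H\<close> below plays the role of
  the inverse matrix h^{ab}; gamma is held fixed.\<close>

definition a1 :: "real^2^2 \<Rightarrow> real^2^2 \<Rightarrow> real" where
  "a1 \<gamma> H = trace (\<gamma> ** H)"

definition a2 :: "real^2^2 \<Rightarrow> real^2^2 \<Rightarrow> real" where
  "a2 \<gamma> H = trace (\<gamma> ** H ** \<gamma> ** H)"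

definition emat :: "2 \<Rightarrow> 2 \<Rightarrow> real^2^2" where
  "emat i j = (\<chi> k l. if k = i \<and> l = j then 1 else 0)"

definition stationary :: "(real^2^2 \<Rightarrow> real) \<Rightarrow> real^2^2 \<Rightarrow> bool" where
  "stationary L H \<longleftrightarrow>
     (\<forall>i j. ((\<lambda>t. L (H + t *\<^sub>R emat i j)) has_real_derivative 0) (at 0))"

definition LagD :: "(real \<Rightarrow> real \<Rightarrow> real) \<Rightarrow> real^2^2 \<Rightarrow> real^2^2 \<Rightarrow> real" where
  "LagD f \<gamma> H = sqrt \<bar>det \<gamma>\<bar> * f (a1 \<gamma> H) (a2 \<gamma> H)"

definition LagDW :: "(real \<Rightarrow> real) \<Rightarrow> real^2^2 \<Rightarrow> real^2^2 \<Rightarrow> real" where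
  "LagDW f \<gamma> H = sqrt \<bar>det \<gamma>\<bar> * f (a2 \<gamma> H / (a1 \<gamma> H)^2)"

end

theory Submission imports Defs begin

lemma minv: "invertible (A::real^2^2) \<Longrightarrow> A ** matrix_inv A = mat 1 \<and> matrix_inv A ** A = mat 1"
  unfolding matrix_inv_def invertible_def by (rule someI_ex)

lemma trace_emat: "trace ((M::real^2^2) ** emat i j) = M$j$i"
  unfolding trace_def matrix_matrix_mult_def emat_def
  using exhaust_2[of i] exhaust_2[of j]
  by (auto simp: trace_def matrix_matrix_mult_def emat_def sum_2)

lemma matrix_add_rdistrib: "((A::real^2^2) + B) ** C = A ** C + B ** C"
  by (vector matrix_matrix_mult_def sum.distrib[symmetric] field_simps)

lemma a1_line: "a1 \<gamma> (H + t *\<^sub>R emat i j) = a1 \<gamma> H + t * \<gamma>$j$i"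
  unfolding a1_def by (simp add: matrix_add_ldistrib trace_add matrix_scalar_ac trace_emat)

lemma trace_scaleR: "trace (c *\<^sub>R (M::real^2^2)) = c * trace M"
  by (simp add: trace_def sum_distrib_left)

lemma a2_line: "a2 \<gamma> (H + t *\<^sub>R emat i j) = a2 \<gamma> H + 2 * t * (\<gamma> ** H ** \<gamma>)$j$i + t^2 * a2 \<gamma> (emat i j)"
proof -
  let ?E = "emat i j"
  have sym: "trace (\<gamma> ** ?E ** \<gamma> ** H) = trace (\<gamma> ** H ** \<gamma> ** ?E)"
    by (metis matrix_mul_assoc trace_mul_sym)
  have "\<gamma> ** (H + t *\<^sub>R ?E) ** \<gamma> ** (H + t *\<^sub>R ?E)
      = \<gamma> ** H ** \<gamma> ** H + t *\<^sub>R (\<gamma> ** H ** \<gamma> ** ?E) + t *\<^sub>R (\<gamma> ** ?E ** \<gamma> ** H)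
        + (t^2) *\<^sub>R (\<gamma> ** ?E ** \<gamma> ** ?E)"
    by (simp add: matrix_add_ldistrib matrix_add_rdistrib matrix_scalar_ac scalar_matrix_assoc[symmetric] power2_eq_square algebra_simps)
  then show ?thesis unfolding a2_def
    by (simp add: trace_add trace_scaleR sym trace_emat)
qed


lemma A1_deriv: "((\<lambda>t. a1 \<gamma> (H + t *\<^sub>R emat i j)) has_real_derivative \<gamma>$j$i) (at 0)"
  unfolding a1_line by (auto intro!: derivative_eq_intros)

lemma A2_deriv: "((\<lambda>t. a2 \<gamma> (H + t *\<^sub>R emat i j)) has_real_derivative 2 * (\<gamma> ** H ** \<gamma>)$j$i) (at 0)"
  unfolding a2_line by (auto intro!: derivative_eq_intros)

lemma LagD_deriv:
  assumes f_C1: "\<And>x y. ((\<lambda>(u, v). f u v) has_derivative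
                 (\<lambda>(du, dv). f1 x y * du + f2 x y * dv)) (at (x, y))"
  shows "((\<lambda>t. LagD f \<gamma> (H + t *\<^sub>R emat i j)) has_real_derivative
     sqrt \<bar>det \<gamma>\<bar> * (f1 (a1 \<gamma> H) (a2 \<gamma> H) * \<gamma>$j$i + f2 (a1 \<gamma> H) (a2 \<gamma> H) * (2 * (\<gamma> ** H ** \<gamma>)$j$i))) (at 0)"
proof -
  let ?A1 = "\<lambda>t. a1 \<gamma> (H + t *\<^sub>R emat i j)" and ?A2 = "\<lambda>t. a2 \<gamma> (H + t *\<^sub>R emat i j)"
  have p: "((\<lambda>t. (?A1 t, ?A2 t)) has_derivative (\<lambda>t. ((\<gamma>$j$i) * t, (2 * (\<gamma> ** H ** \<gamma>)$j$i) * t))) (at 0)"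
    by (rule has_derivative_Pair; rule has_field_derivative_imp_has_derivative; rule A1_deriv A2_deriv)
  have eq: "(?A1 0, ?A2 0) = (a1 \<gamma> H, a2 \<gamma> H)" by simp
  have fd: "((\<lambda>(u, v). f u v) has_derivative (\<lambda>(du, dv). f1 (a1 \<gamma> H) (a2 \<gamma> H) * du + f2 (a1 \<gamma> H) (a2 \<gamma> H) * dv)) (at (?A1 0, ?A2 0))"
    unfolding eq by (rule f_C1)
  have c: "((\<lambda>t. (\<lambda>(u, v). f u v) (?A1 t, ?A2 t)) has_derivative
     (\<lambda>t. (\<lambda>(du, dv). f1 (a1 \<gamma> H) (a2 \<gamma> H) * du + f2 (a1 \<gamma> H) (a2 \<gamma> H) * dv) ((\<gamma>$j$i) * t, (2 * (\<gamma> ** H ** \<gamma>)$j$i) * t))) (at 0)"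
    by (rule has_derivative_compose[OF p fd])
  have c1: "((\<lambda>t. f (?A1 t) (?A2 t)) has_derivative
     (\<lambda>t. f1 (a1 \<gamma> H) (a2 \<gamma> H) * ((\<gamma>$j$i) * t) + f2 (a1 \<gamma> H) (a2 \<gamma> H) * ((2 * (\<gamma> ** H ** \<gamma>)$j$i) * t))) (at 0)"
    using c by (simp only: case_prod_conv)
  have c2: "((\<lambda>t. sqrt \<bar>det \<gamma>\<bar> * f (?A1 t) (?A2 t)) has_derivative
     (\<lambda>t. sqrt \<bar>det \<gamma>\<bar> * (f1 (a1 \<gamma> H) (a2 \<gamma> H) * ((\<gamma>$j$i) * t) + f2 (a1 \<gamma> H) (a2 \<gamma> H) * ((2 * (\<gamma> ** H ** \<gamma>)$j$i) * t)))) (at 0)"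
    by (rule has_derivative_mult_right[OF c1])
  have fe: "(\<lambda>t. sqrt \<bar>det \<gamma>\<bar> * (f1 (a1 \<gamma> H) (a2 \<gamma> H) * ((\<gamma>$j$i) * t) + f2 (a1 \<gamma> H) (a2 \<gamma> H) * ((2 * (\<gamma> ** H ** \<gamma>)$j$i) * t)))
     = (*) (sqrt \<bar>det \<gamma>\<bar> * (f1 (a1 \<gamma> H) (a2 \<gamma> H) * \<gamma>$j$i + f2 (a1 \<gamma> H) (a2 \<gamma> H) * (2 * (\<gamma> ** H ** \<gamma>)$j$i)))"
    by (rule ext) (simp add: algebra_simps)
  show ?thesis unfolding has_field_derivative_def LagD_def
    using c2 unfolding fe .
qed

lemma LagDW_deriv:
  assumes g_C1: "\<And>x. (g has_real_derivative g' x) (at x)"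
    and nz: "a1 \<gamma> H \<noteq> 0"
  shows "((\<lambda>t. LagDW g \<gamma> (H + t *\<^sub>R emat i j)) has_real_derivative
     sqrt \<bar>det \<gamma>\<bar> * (g' (a2 \<gamma> H / (a1 \<gamma> H)^2) *
       ((2 * (\<gamma> ** H ** \<gamma>)$j$i * (a1 \<gamma> H)^2 - a2 \<gamma> H * (2 * (\<gamma>$j$i * a1 \<gamma> H))) / ((a1 \<gamma> H)^2 * (a1 \<gamma> H)^2)))) (at 0)"
proof -
  let ?A1 = "\<lambda>t. a1 \<gamma> (H + t *\<^sub>R emat i j)" and ?A2 = "\<lambda>t. a2 \<gamma> (H + t *\<^sub>R emat i j)"
  have sq: "((\<lambda>t. (?A1 t)^2) has_real_derivative 2 * (\<gamma>$j$i * a1 \<gamma> H)) (at 0)"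
    using DERIV_power[OF A1_deriv[of \<gamma> H i j], of 2] by simp
  have r: "((\<lambda>t. ?A2 t / (?A1 t)^2) has_real_derivative
     ((2 * (\<gamma> ** H ** \<gamma>)$j$i * (a1 \<gamma> H)^2 - a2 \<gamma> H * (2 * (\<gamma>$j$i * a1 \<gamma> H))) / ((a1 \<gamma> H)^2 * (a1 \<gamma> H)^2))) (at 0)"
    using DERIV_divide[OF A2_deriv sq] nz by simp
  have "((\<lambda>t. g (?A2 t / (?A1 t)^2)) has_real_derivative g' (a2 \<gamma> H / (a1 \<gamma> H)^2) *
       ((2 * (\<gamma> ** H ** \<gamma>)$j$i * (a1 \<gamma> H)^2 - a2 \<gamma> H * (2 * (\<gamma>$j$i * a1 \<gamma> H))) / ((a1 \<gamma> H)^2 * (a1 \<gamma> H)^2))) (at 0)"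
    using DERIV_chain2[OF g_C1 r] by simp
  then show ?thesis unfolding LagDW_def by (rule DERIV_cmult)
qed

lemma key:
  fixes \<gamma> h :: "real^2^2"
  assumes gi: "invertible \<gamma>" and hi: "invertible h" and e: "\<gamma> ** matrix_inv h ** \<gamma> = c *\<^sub>R \<gamma>"
  shows "c \<noteq> 0 \<and> h = (1/c) *\<^sub>R \<gamma> \<and> \<gamma> ** matrix_inv h = c *\<^sub>R mat 1"
proof -
  let ?H = "matrix_inv h" and ?G = "matrix_inv \<gamma>"
  have gG: "\<gamma> ** ?G = mat 1" using minv[OF gi] by simp
  have Hh: "?H ** h = mat 1" using minv[OF hi] by simp
  have gH: "\<gamma> ** ?H = c *\<^sub>R mat 1"
  proof -
    have "\<gamma> ** ?H = \<gamma> ** ?H ** (\<gamma> ** ?G)" by (simp add: gG)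
    also have "\<dots> = (c *\<^sub>R \<gamma>) ** ?G" by (simp add: matrix_mul_assoc e)
    also have "\<dots> = c *\<^sub>R mat 1" by (simp add: scalar_matrix_assoc[symmetric] gG)
    finally show ?thesis .
  qed
  have gh: "\<gamma> = c *\<^sub>R h"
  proof -
    have "\<gamma> = \<gamma> ** (?H ** h)" by (simp add: Hh)
    also have "\<dots> = c *\<^sub>R h" by (simp add: matrix_mul_assoc gH scalar_matrix_assoc[symmetric])
    finally show ?thesis .
  qed
  have c0: "c \<noteq> 0"
  proof
    assume "c = 0"
    then have "\<gamma> = 0" using gh by simp
    then show False using gi unfolding invertible_def
      by (metis matrix_mul_lid times0_left mat_0 zero_neq_one vec_eq_iff mat_def zero_index vec_lambda_beta)
  qed
  then have "h = (1/c) *\<^sub>R \<gamma>" using gh by simp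
  then show ?thesis using c0 gH by simp
qed

lemma trace_mat1: "trace (mat 1 :: real^2^2) = 2"
  by (simp add: trace_I)

lemma a12_from:
  assumes "\<gamma> ** H = c *\<^sub>R mat 1"
  shows "a1 \<gamma> H = 2 * c" "a2 \<gamma> H = 2 * c^2"
proof -
  show "a1 \<gamma> H = 2 * c" unfolding a1_def assms by (simp add: trace_scaleR trace_mat1)
  have "\<gamma> ** H ** \<gamma> ** H = (\<gamma> ** H) ** (\<gamma> ** H)" by (simp add: matrix_mul_assoc)
  also have "\<dots> = (c^2) *\<^sub>R mat 1" unfolding assms
    by (simp add: matrix_scalar_ac scalar_matrix_assoc[symmetric] power2_eq_square)
  finally show "a2 \<gamma> H = 2 * c^2" unfolding a2_def by (simp add: trace_scaleR trace_mat1)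
qed


lemma aux: "2 * (u * x) * (2 * u)^2 - 2 * u^2 * (2 * (x * (2 * u))) = (0::real)"
  by (simp add: power2_eq_square algebra_simps)

lemma aux2: "s \<noteq> 0 \<Longrightarrow> G \<noteq> 0 \<Longrightarrow> d \<noteq> 0 \<Longrightarrow> s * (G * (N / d)) = 0 \<Longrightarrow> N = (0::real)"
  by simp

lemma aux3: assumes a: "a \<noteq> 0" and e: "2 * X * a^2 - b * (2 * (x * a)) = 0" shows "X = b / a * (x::real)"
proof -
  have "2 * a * (X * a - b * x) = 0" using e by (simp add: power2_eq_square algebra_simps)
  then have "X * a = b * x" using a by simp
  then show ?thesis using a by (simp add: field_simps)
qed

lemma aux4: "s * (G * (0 / d)) = (0::real)"
  by simp

lemma inv_nz: "invertible (\<gamma>::real^2^2) \<Longrightarrow> \<gamma> \<noteq> 0"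
proof
  assume "invertible \<gamma>" "\<gamma> = 0"
  then obtain B :: "real^2^2" where "0 ** B = mat 1" unfolding invertible_def by auto
  then have "(mat 1 :: real^2^2) = 0" by simp
  then have "(mat 1 :: real^2^2) $ 1 $ 1 = 0" by simp
  then show False by (simp add: mat_def)
qed


theorem mainTheorem8:
  fixes \<gamma> :: "real^2^2"
    and f f1 f2 :: "real \<Rightarrow> real \<Rightarrow> real"
    and g g' :: "real \<Rightarrow> real"
  assumes gsym: "transpose \<gamma> = \<gamma>"
    and ginv: "invertible \<gamma>"
    and f_C1: "\<And>x y. ((\<lambda>(u, v). f u v) has_derivative
                 (\<lambda>(du, dv). f1 x y * du + f2 x y * dv)) (at (x, y))"
    and f1_cont: "continuous_on UNIV (\<lambda>(u, v). f1 u v)"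
    and f2_cont: "continuous_on UNIV (\<lambda>(u, v). f2 u v)"
    and g_C1: "\<And>x. (g has_real_derivative g' x) (at x)"
    and g'_cont: "continuous_on UNIV g'"
  shows
    "(\<forall>h :: real^2^2. transpose h = h \<and> invertible h
        \<and> stationary (LagD f \<gamma>) (matrix_inv h)
        \<and> f1 (a1 \<gamma> (matrix_inv h)) (a2 \<gamma> (matrix_inv h)) \<noteq> 0
        \<longrightarrow> (\<exists>\<phi>. \<phi> \<noteq> 0 \<and> h = \<phi> *\<^sub>R \<gamma>
               \<and> \<phi> = - 2 * f2 (2 / \<phi>) (2 / \<phi>^2) / f1 (2 / \<phi>) (2 / \<phi>^2)
               \<and> LagD f \<gamma> (matrix_inv h) = f (2 / \<phi>) (2 / \<phi>^2) * sqrt \<bar>det \<gamma>\<bar>))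
     \<and> (\<forall>\<phi>::real. \<phi> \<noteq> 0 \<longrightarrow>
          stationary (LagDW g \<gamma>) (matrix_inv (\<phi> *\<^sub>R \<gamma>))
          \<and> LagDW g \<gamma> (matrix_inv (\<phi> *\<^sub>R \<gamma>)) = g (1/2) * sqrt \<bar>det \<gamma>\<bar>)
     \<and> (\<forall>h :: real^2^2. transpose h = h \<and> invertible h
        \<and> stationary (LagDW g \<gamma>) (matrix_inv h)
        \<and> a1 \<gamma> (matrix_inv h) \<noteq> 0
        \<and> g' (a2 \<gamma> (matrix_inv h) / (a1 \<gamma> (matrix_inv h))^2) \<noteq> 0
        \<longrightarrow> (\<exists>\<phi>. \<phi> \<noteq> 0 \<and> h = \<phi> *\<^sub>R \<gamma>))"
proof -
  have sq0: "sqrt \<bar>det \<gamma>\<bar> \<noteq> 0" using ginv invertible_det_nz[of \<gamma>] by simp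
  have gnz: "\<gamma> \<noteq> 0" using inv_nz[OF ginv] .
  have P1: "\<forall>h :: real^2^2. transpose h = h \<and> invertible h
        \<and> stationary (LagD f \<gamma>) (matrix_inv h)
        \<and> f1 (a1 \<gamma> (matrix_inv h)) (a2 \<gamma> (matrix_inv h)) \<noteq> 0
        \<longrightarrow> (\<exists>\<phi>. \<phi> \<noteq> 0 \<and> h = \<phi> *\<^sub>R \<gamma>
               \<and> \<phi> = - 2 * f2 (2 / \<phi>) (2 / \<phi>^2) / f1 (2 / \<phi>) (2 / \<phi>^2)
               \<and> LagD f \<gamma> (matrix_inv h) = f (2 / \<phi>) (2 / \<phi>^2) * sqrt \<bar>det \<gamma>\<bar>)"
  proof (intro allI impI)
    fix h :: "real^2^2"
    assume A: "transpose h = h \<and> invertible h \<and> stationary (LagD f \<gamma>) (matrix_inv h)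
        \<and> f1 (a1 \<gamma> (matrix_inv h)) (a2 \<gamma> (matrix_inv h)) \<noteq> 0"
    define H where "H = matrix_inv h"
    define F1 where "F1 = f1 (a1 \<gamma> H) (a2 \<gamma> H)"
    define F2 where "F2 = f2 (a1 \<gamma> H) (a2 \<gamma> H)"
    have hi: "invertible h" and st: "stationary (LagD f \<gamma>) H" and F1nz: "F1 \<noteq> 0"
      using A by (auto simp: H_def F1_def)
    have eqs: "F1 * \<gamma>$j$i + F2 * (2 * (\<gamma> ** H ** \<gamma>)$j$i) = 0" for i j
    proof -
      have "((\<lambda>t. LagD f \<gamma> (H + t *\<^sub>R emat i j)) has_real_derivative 0) (at 0)"
        using st unfolding stationary_def by blast
      from DERIV_unique[OF LagD_deriv[OF f_C1] this] sq0 show ?thesis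
        by (simp add: F1_def F2_def)
    qed
    have F2nz: "F2 \<noteq> 0"
    proof
      assume "F2 = 0"
      then have "\<gamma> = 0" using eqs F1nz by (simp add: vec_eq_iff)
      then show False using gnz by simp
    qed
    have M: "\<gamma> ** H ** \<gamma> = (- F1 / (2 * F2)) *\<^sub>R \<gamma>"
    proof -
      have "(\<gamma> ** H ** \<gamma>)$i$j = (- F1 / (2 * F2)) * \<gamma>$i$j" for i j
        using eqs[of i j] eqs[of j i] F2nz by (simp add: field_simps)
      then show ?thesis by (simp add: vec_eq_iff)
    qed
    define c where "c = - F1 / (2 * F2)"
    have M': "\<gamma> ** matrix_inv h ** \<gamma> = c *\<^sub>R \<gamma>" using M unfolding H_def c_def .
    have K: "c \<noteq> 0 \<and> h = (1/c) *\<^sub>R \<gamma> \<and> \<gamma> ** H = c *\<^sub>R mat 1"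
      using key[OF ginv hi M'] unfolding H_def .
    have gHc: "\<gamma> ** H = c *\<^sub>R mat 1" using K by (rule conjunct2[OF conjunct2])
    have a1v: "a1 \<gamma> H = 2 * c" by (rule a12_from(1)[OF gHc])
    have a2v: "a2 \<gamma> H = 2 * c^2" by (rule a12_from(2)[OF gHc])
    have e1: "2 / (1/c) = 2 * c" and e2: "2 / (1/c)^2 = 2 * c^2" using K by (simp_all add: field_simps)
    show "\<exists>\<phi>. \<phi> \<noteq> 0 \<and> h = \<phi> *\<^sub>R \<gamma>
               \<and> \<phi> = - 2 * f2 (2 / \<phi>) (2 / \<phi>^2) / f1 (2 / \<phi>) (2 / \<phi>^2)
               \<and> LagD f \<gamma> (matrix_inv h) = f (2 / \<phi>) (2 / \<phi>^2) * sqrt \<bar>det \<gamma>\<bar>"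
    proof (intro exI conjI)
      show "1/c \<noteq> 0" using K by simp
      show "h = (1/c) *\<^sub>R \<gamma>" using K by simp
      show "1/c = - 2 * f2 (2 / (1/c)) (2 / (1/c)^2) / f1 (2 / (1/c)) (2 / (1/c)^2)"
      proof -
        have q1: "f1 (2 / (1/c)) (2 / (1/c)^2) = F1" unfolding e1 e2 F1_def a1v a2v ..
        have q2: "f2 (2 / (1/c)) (2 / (1/c)^2) = F2" unfolding e1 e2 F2_def a1v a2v ..
        show ?thesis unfolding q1 q2 unfolding c_def using F1nz F2nz by (simp add: field_simps)
      qed
      show "LagD f \<gamma> (matrix_inv h) = f (2 / (1/c)) (2 / (1/c)^2) * sqrt \<bar>det \<gamma>\<bar>"
        unfolding e1 e2 a1v[symmetric] a2v[symmetric] LagD_def H_def by simp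
    qed
  qed
  have P2: "\<forall>\<phi>::real. \<phi> \<noteq> 0 \<longrightarrow>
          stationary (LagDW g \<gamma>) (matrix_inv (\<phi> *\<^sub>R \<gamma>))
          \<and> LagDW g \<gamma> (matrix_inv (\<phi> *\<^sub>R \<gamma>)) = g (1/2) * sqrt \<bar>det \<gamma>\<bar>"
  proof (intro allI impI)
    fix \<phi> :: real
    assume pnz: "\<phi> \<noteq> 0"
    define H where "H = matrix_inv (\<phi> *\<^sub>R \<gamma>)"
    have "(\<phi> *\<^sub>R \<gamma>) ** H = mat 1"
      using minv[OF scalar_invertible[OF pnz ginv]] unfolding H_def by simp
    then have "\<phi> *\<^sub>R (\<gamma> ** H) = mat 1" by (simp add: scalar_matrix_assoc)
    then have gH: "\<gamma> ** H = (1/\<phi>) *\<^sub>R mat 1"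
    proof -
      assume e: "\<phi> *\<^sub>R (\<gamma> ** H) = mat 1"
      have "\<gamma> ** H = (1/\<phi>) *\<^sub>R (\<phi> *\<^sub>R (\<gamma> ** H))" using pnz by simp
      then show ?thesis unfolding e .
    qed
    have gHg: "\<gamma> ** H ** \<gamma> = (1/\<phi>) *\<^sub>R \<gamma>"
      unfolding gH by (simp add: scalar_matrix_assoc[symmetric])
    have a1v: "a1 \<gamma> H = 2 * (1/\<phi>)" and a2v: "a2 \<gamma> H = 2 * (1/\<phi>)^2" using a12_from[OF gH] by blast+
    have r: "a2 \<gamma> H / (a1 \<gamma> H)^2 = 1/2" unfolding a1v a2v using pnz by (simp add: field_simps)
    have a1nz: "a1 \<gamma> H \<noteq> 0" unfolding a1v using pnz by simp
    have "stationary (LagDW g \<gamma>) H"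
      unfolding stationary_def
    proof (intro allI)
      fix i j
      have z: "(2 * (\<gamma> ** H ** \<gamma>)$j$i * (a1 \<gamma> H)^2 - a2 \<gamma> H * (2 * (\<gamma>$j$i * a1 \<gamma> H))) = 0"
      proof -
        have e: "(\<gamma> ** H ** \<gamma>)$j$i = (1/\<phi>) * \<gamma>$j$i" unfolding gHg by simp
        show ?thesis unfolding e a1v a2v by (rule aux)
      qed
      show "((\<lambda>t. LagDW g \<gamma> (H + t *\<^sub>R emat i j)) has_real_derivative 0) (at 0)"
        using LagDW_deriv[OF g_C1 a1nz, of i j] unfolding z aux4 .
    qed
    moreover have "LagDW g \<gamma> H = g (1/2) * sqrt \<bar>det \<gamma>\<bar>"
      unfolding LagDW_def r by simp
    ultimately show "stationary (LagDW g \<gamma>) (matrix_inv (\<phi> *\<^sub>R \<gamma>))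
          \<and> LagDW g \<gamma> (matrix_inv (\<phi> *\<^sub>R \<gamma>)) = g (1/2) * sqrt \<bar>det \<gamma>\<bar>"
      unfolding H_def by simp
  qed
  have P3: "\<forall>h :: real^2^2. transpose h = h \<and> invertible h
        \<and> stationary (LagDW g \<gamma>) (matrix_inv h)
        \<and> a1 \<gamma> (matrix_inv h) \<noteq> 0
        \<and> g' (a2 \<gamma> (matrix_inv h) / (a1 \<gamma> (matrix_inv h))^2) \<noteq> 0
        \<longrightarrow> (\<exists>\<phi>. \<phi> \<noteq> 0 \<and> h = \<phi> *\<^sub>R \<gamma>)"
  proof (intro allI impI)
    fix h :: "real^2^2"
    assume A: "transpose h = h \<and> invertible h
        \<and> stationary (LagDW g \<gamma>) (matrix_inv h)
        \<and> a1 \<gamma> (matrix_inv h) \<noteq> 0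
        \<and> g' (a2 \<gamma> (matrix_inv h) / (a1 \<gamma> (matrix_inv h))^2) \<noteq> 0"
    define H where "H = matrix_inv h"
    have hi: "invertible h" and st: "stationary (LagDW g \<gamma>) H" and a1nz: "a1 \<gamma> H \<noteq> 0"
      and gnz': "g' (a2 \<gamma> H / (a1 \<gamma> H)^2) \<noteq> 0"
      using A by (auto simp: H_def)
    have eqs: "(\<gamma> ** H ** \<gamma>)$j$i = (a2 \<gamma> H / a1 \<gamma> H) * \<gamma>$j$i" for i j
    proof -
      have d0: "((\<lambda>t. LagDW g \<gamma> (H + t *\<^sub>R emat i j)) has_real_derivative 0) (at 0)"
        using st unfolding stationary_def by blast
      have "2 * (\<gamma> ** H ** \<gamma>)$j$i * (a1 \<gamma> H)^2 - a2 \<gamma> H * (2 * (\<gamma>$j$i * a1 \<gamma> H)) = 0"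
        by (rule aux2[OF sq0 gnz' _ DERIV_unique[OF LagDW_deriv[OF g_C1 a1nz] d0]]) (simp add: a1nz)
      then show ?thesis by (rule aux3[OF a1nz])
    qed
    have M: "\<gamma> ** H ** \<gamma> = (a2 \<gamma> H / a1 \<gamma> H) *\<^sub>R \<gamma>"
      using eqs by (simp add: vec_eq_iff)
    have M': "\<gamma> ** matrix_inv h ** \<gamma> = (a2 \<gamma> H / a1 \<gamma> H) *\<^sub>R \<gamma>" using M unfolding H_def .
    have K: "a2 \<gamma> H / a1 \<gamma> H \<noteq> 0 \<and> h = (1/(a2 \<gamma> H / a1 \<gamma> H)) *\<^sub>R \<gamma>"
      using key[OF ginv hi M'] by simp
    then show "\<exists>\<phi>. \<phi> \<noteq> 0 \<and> h = \<phi> *\<^sub>R \<gamma>" by (intro exI[of _ "1/(a2 \<gamma> H / a1 \<gamma> H)"]) simp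
  qed
  show ?thesis by (rule conjI[OF P1 conjI[OF P2 P3]])
qed

end
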